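(* Let $\mathcal S'$ be a finite state space, let $\mathcal A(s)$ be a finite nonempty action set for each $s\in\mathcal S'$, let $\gamma\in(0,1)$, and let $r:\{(s,a):s\in\mathcal S',a\in\mathcal A(s)\}\to\mathbb R$ be a reward with $R_{\max}:=\sup_{s,a}|r(s,a)|<\infty$. Let $\mathcal B:=\{V:\mathcal S'\to\mathbb R \text{ bounded}\}$ with the supremum norm $\|\cdot\|_\infty$. Let $(\Omega,\mathcal F,\mathbb P)$ be a probability space with an increasing filtration $\{\mathcal F_t\}_{t\ge0}$. For each $t\ge 0$ let $\{U^t_{s,a}\}_{(s,a)}$ be a random $(s,a)$-rectangular family of nonempty ambiguity sets $U^t_{s,a}(\omega)\subseteq\Delta(\mathcal S')$ that is $\mathcal F_t$-measurable, and let $\mathcal T^t_{\mathrm{rob}}(\omega)$ be the induced robust Bellman operator $$(\mathcal T^t_{\mathrm{rob}}(\omega)V)(s)=\max_{a\in\mathcal A(s)}\ \min_{P(\cdot\mid s,a)\in U^t_{s,a}(\omega)}\Big\{r(s,a)+\gamma\sum_{s'\in\mathcal S'}P(s'\mid s,a)V(s')\Big\},$$ which is thus $\mathcal F_t$-measurable. Assume the standing assumptions (A1)–(A6) stated in the context. Suppose that, for $\mathbb P$-almost every $\omega\in\Omega$, there is an operator $\mathcal T_\infty(\omega)$ on $\mathcal B$ such that for every bounded set $B\subset\mathcal B$, $$\sup_{V\in B}\|\mathcal T^t_{\mathrm{rob}}(\omega)V-\mathcal T_\infty(\omega)V\|_\infty\longrightarrow 0\quad (t\to\infty).$$ Then $\mathcal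 T_\infty(\omega)$ is a $\gamma$-contraction on $(\mathcal B,\|\cdot\|_\infty)$, and there exists $\Omega_0\subseteq\Omega$ with $\mathbb P(\Omega_0)=1$ such that for every $\omega\in\Omega_0$ and every bounded initial value $V_0(\omega)\in\mathcal B$, the iteration $V_{t+1}(\omega)=\mathcal T^t_{\mathrm{rob}}(\omega)V_t(\omega)$ converges in $\|\cdot\|_\infty$ to the unique fixed point $V^\star(\omega)$ of $\mathcal T_\infty(\omega)$, i.e. $V_t(\omega)\to V^\star(\omega)$ and $\mathcal T_\infty(\omega)V^\star(\omega)=V^\star(\omega)$.
   Context: $\Delta(\mathcal S')$ denotes the probability simplex over $\mathcal S'$. A family of ambiguity sets is $(s,a)$-rectangular if the overall set of transition kernels is the Cartesian product $\prod_{(s,a)}U_{s,a}$, i.e. the next-state distribution is chosen independently for each state–action pair. Setting: there is a finite set of nodes $v$, a mapping $v(s,a)$ assigning each state–action pair to a node, a compact threat-parameter space $\Theta$, credible sets $U_v^t\subseteq\Theta$, and continuous maps $\phi_{s,a}:\Theta\to\Delta(\mathcal S')$ with $U^t_{s,a}=\phi_{s,a}(U^t_{v(s,a)})$. Standing assumptions: (A1) $\gamma\in(0,1)$ and per-step rewards (including any exposure penalty) are uniformly bounded and measurable. (A2) For any $(s,a)$-rectangular family of ambiguity sets, the robust Bellman operator above is a $\gamma$-contraction on $(\mathbb R^{|\mathcal S'|},\|\cdot\|_\infty)$. (A3) The Bayesian posterior of the node parameter $\theta_v$ given the data $\mathcal D_t$ observed up to time $t$ is well defined on the compact $\Theta$,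 and each credible set $U^t_v$ is Borel measurable. (A4) For each node $v$ there is a target $\theta_v^\star\in\Theta$ with $\mathbb P(\theta_v^\star\in U_v^t)\to1$ and $\sup_{\theta,\theta'\in U_v^t}\|\theta-\theta'\|_\infty\to0$ in probability, and there is a random finite time after which $U_v^{t+1}\subseteq U_v^t$ for all $t$. (A5) For every node $v$ and sensing action $a$, the maps $\theta\mapsto\mathbb E_{p(o\mid a,\theta)}[o]$ (expected observation) and $\theta\mapsto p_{\exp}(a,\theta)$ (exposure probability) are continuous on $\Theta$, with an integrable dominating function when the observation space is infinite. (A6) All action sets are finite and a fixed Borel-measurable tie-breaking rule is used for greedy action selection. *)

theory Defs
  imports "HOL-Probability.Probability"
begin

text \<open>Finite state space = finite type 's; value functions V :: 's => real
 (automatically bounded). Sup norm:\<close>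
definition supnorm :: "('s::finite \<Rightarrow> real) \<Rightarrow> real" where
  "supnorm V = Max (range (\<lambda>s. \<bar>V s\<bar>))"

definition prob_simplex :: "('s::finite \<Rightarrow> real) set" where
  "prob_simplex = {P. (\<forall>s. 0 \<le> P s) \<and> (\<Sum>s\<in>UNIV. P s) = 1}"

text \<open>Robust Bellman operator induced by an (s,a)-rectangular family Uf of ambiguity sets
 (Uf s a is the ambiguity set for the pair (s,a)); the inner min is an infimum.\<close>
definition rob_bellman ::
  "('s::finite \<Rightarrow> 'a set) \<Rightarrow> ('s \<Rightarrow> 'a \<Rightarrow> real) \<Rightarrow> real
   \<Rightarrow> ('s \<Rightarrow> 'a \<Rightarrow> ('s \<Rightarrow> real) set) \<Rightarrow> ('s \<Rightarrow> real) \<Rightarrow> ('s \<Rightarrow> real)" where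
  "rob_bellman A r \<gamma> Uf V = (\<lambda>s. Max ((\<lambda>a. INF P\<in>Uf s a. r s a + \<gamma> * (\<Sum>s'\<in>UNIV. P s' * V s')) ` A s))"

definition is_contraction :: "real \<Rightarrow> (('s::finite \<Rightarrow> real) \<Rightarrow> ('s \<Rightarrow> real)) \<Rightarrow> bool" where
  "is_contraction \<gamma> T \<longleftrightarrow> (\<forall>V W. supnorm (\<lambda>s. T V s - T W s) \<le> \<gamma> * supnorm (\<lambda>s. V s - W s))"

definition bounded_fs :: "('s::finite \<Rightarrow> real) set \<Rightarrow> bool" where
  "bounded_fs B \<longleftrightarrow> (\<exists>C. \<forall>V\<in>B. supnorm V \<le> C)"

end

theory Submission
  imports Defs
begin

lemma supnorm_ge: "\<bar>V s\<bar> \<le> supnorm (V::'s::finite \<Rightarrow> real)"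
  unfolding supnorm_def by (rule Max_ge) auto

lemma supnorm_nonneg: "0 \<le> supnorm (V::'s::finite \<Rightarrow> real)"
  using supnorm_ge[of V undefined] by linarith

lemma supnorm_le: "(\<And>s. \<bar>V s\<bar> \<le> c) \<Longrightarrow> supnorm (V::'s::finite \<Rightarrow> real) \<le> c"
  unfolding supnorm_def by (subst Max_le_iff) auto

lemma supnorm_tri: "supnorm (\<lambda>s. (f::'s::finite \<Rightarrow> real) s + g s) \<le> supnorm f + supnorm g"
proof (rule supnorm_le)
  fix s show "\<bar>f s + g s\<bar> \<le> supnorm f + supnorm g"
    using supnorm_ge[of f s] supnorm_ge[of g s] by linarith
qed

lemma supnorm_tri3: "supnorm (\<lambda>s. (f::'s::finite \<Rightarrow> real) s - h s) \<le> supnorm (\<lambda>s. f s - g s) + supnorm (\<lambda>s. g s - h s)"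
  using supnorm_tri[of "\<lambda>s. f s - g s" "\<lambda>s. g s - h s"] by simp

lemma supnorm_comm: "supnorm (\<lambda>s. (f::'s::finite \<Rightarrow> real) s - g s) = supnorm (\<lambda>s. g s - f s)"
proof (rule antisym)
  show "supnorm (\<lambda>s. f s - g s) \<le> supnorm (\<lambda>s. g s - f s)"
  proof (rule supnorm_le)
    fix s show "\<bar>f s - g s\<bar> \<le> supnorm (\<lambda>s. g s - f s)"
      using supnorm_ge[of "\<lambda>s. g s - f s" s] by (metis abs_minus_commute)
  qed
  show "supnorm (\<lambda>s. g s - f s) \<le> supnorm (\<lambda>s. f s - g s)"
  proof (rule supnorm_le)
    fix s show "\<bar>g s - f s\<bar> \<le> supnorm (\<lambda>s. f s - g s)"
      using supnorm_ge[of "\<lambda>s. f s - g s" s] by (metis abs_minus_commute)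
  qed
qed

lemma supnorm_zero: "supnorm (\<lambda>s. (f::'s::finite \<Rightarrow> real) s - g s) \<le> 0 \<Longrightarrow> f = g"
proof
  fix s assume "supnorm (\<lambda>s. f s - g s) \<le> 0"
  with supnorm_ge[of "\<lambda>s. f s - g s" s] show "f s = g s" by linarith
qed

lemma supnorm_le_sum: "supnorm (V::'s::finite \<Rightarrow> real) \<le> (\<Sum>s\<in>UNIV. \<bar>V s\<bar>)"
  by (rule supnorm_le) (rule member_le_sum, auto)

lemma supnorm_tendsto:
  assumes "\<And>s. (\<lambda>n. X n s) \<longlonglongrightarrow> (L s::real)"
  shows "(\<lambda>n. supnorm (\<lambda>s. (X n s :: real) - L (s::'s::finite))) \<longlonglongrightarrow> 0"
proof (rule tendsto_sandwich[of "\<lambda>_. 0" _ _ "\<lambda>n. \<Sum>s\<in>UNIV. \<bar>X n s - L s\<bar>"])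
  show "\<forall>\<^sub>F n in sequentially. 0 \<le> supnorm (\<lambda>s. X n s - L s)" by (simp add: supnorm_nonneg)
  show "\<forall>\<^sub>F n in sequentially. supnorm (\<lambda>s. X n s - L s) \<le> (\<Sum>s\<in>UNIV. \<bar>X n s - L s\<bar>)"
    by (simp add: supnorm_le_sum)
  have "(\<lambda>n. \<Sum>s\<in>UNIV. \<bar>X n s - L s\<bar>) \<longlonglongrightarrow> (\<Sum>s\<in>(UNIV::'s set). \<bar>L s - L s\<bar>)"
    by (intro tendsto_sum tendsto_rabs tendsto_diff assms tendsto_const)
  then show "(\<lambda>n. \<Sum>s\<in>UNIV. \<bar>X n s - L s\<bar>) \<longlonglongrightarrow> 0" by simp
qed auto

lemma contraction_fix:
  fixes T :: "('s::finite \<Rightarrow> real) \<Rightarrow> ('s \<Rightarrow> real)"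
  assumes c: "is_contraction \<gamma> T" and g: "0 < \<gamma>" "\<gamma> < 1"
  shows "\<exists>V. T V = V \<and> (\<forall>W. T W = W \<longrightarrow> W = V)"
proof -
  have C: "supnorm (\<lambda>s. T V s - T W s) \<le> \<gamma> * supnorm (\<lambda>s. V s - W s)" for V W
    using c unfolding is_contraction_def by blast
  define x where "x n = (T ^^ n) (\<lambda>_. 0)" for n
  have xs: "x (Suc n) = T (x n)" for n by (simp add: x_def)
  define c0 where "c0 = supnorm (\<lambda>s. x 1 s - x 0 s)"
  have step: "supnorm (\<lambda>s. x (Suc n) s - x n s) \<le> c0 * \<gamma> ^ n" for n
  proof (induction n)
    case 0 then show ?case by (simp add: c0_def)
  next
    case (Suc n)
    have "supnorm (\<lambda>s. x (Suc (Suc n)) s - x (Suc n) s) \<le> \<gamma> * supnorm (\<lambda>s. x (Suc n) s - x n s)"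
      unfolding xs[of "Suc n"] xs[of n] by (rule C)
    also have "\<dots> \<le> \<gamma> * (c0 * \<gamma> ^ n)" using Suc g by (intro mult_left_mono) auto
    finally show ?case by (simp add: algebra_simps)
  qed
  have summ: "summable (\<lambda>n. x (Suc n) s - x n s)" for s
  proof (rule summable_comparison_test')
    show "summable (\<lambda>n. c0 * \<gamma> ^ n)" using g by (intro summable_mult summable_geometric) auto
    show "norm (x (Suc n) s - x n s) \<le> c0 * \<gamma> ^ n" for n
      using supnorm_ge[of "\<lambda>s. x (Suc n) s - x n s" s] step[of n] by simp
  qed
  define L where "L s = x 0 s + (\<Sum>n. x (Suc n) s - x n s)" for s
  have xl: "(\<lambda>n. x n s) \<longlonglongrightarrow> L s" for s
  proof -
    have "(\<lambda>m. x 0 s + (\<Sum>n<m. x (Suc n) s - x n s)) \<longlonglongrightarrow> L s"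
      unfolding L_def by (intro tendsto_add tendsto_const summable_LIMSEQ summ)
    moreover have "x 0 s + (\<Sum>n<m. x (Suc n) s - x n s) = x m s" for m
      by (induction m) auto
    ultimately show ?thesis by simp
  qed
  have d0: "(\<lambda>n. supnorm (\<lambda>s. x n s - L s)) \<longlonglongrightarrow> 0" by (rule supnorm_tendsto[OF xl])
  have d1: "(\<lambda>n. supnorm (\<lambda>s. x (Suc n) s - L s)) \<longlonglongrightarrow> 0"
    using LIMSEQ_Suc[OF d0] .
  have bound: "supnorm (\<lambda>s. T L s - L s) \<le> \<gamma> * supnorm (\<lambda>s. x n s - L s) + supnorm (\<lambda>s. x (Suc n) s - L s)" for n
  proof -
    have "supnorm (\<lambda>s. T L s - L s) \<le> supnorm (\<lambda>s. T L s - x (Suc n) s) + supnorm (\<lambda>s. x (Suc n) s - L s)"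
      by (rule supnorm_tri3)
    moreover have "supnorm (\<lambda>s. T L s - x (Suc n) s) \<le> \<gamma> * supnorm (\<lambda>s. L s - x n s)"
      unfolding xs by (rule C)
    moreover have "supnorm (\<lambda>s. L s - x n s) = supnorm (\<lambda>s. x n s - L s)" by (rule supnorm_comm)
    ultimately show ?thesis by (metis add_right_mono order_trans)
  qed
  have "(\<lambda>n. \<gamma> * supnorm (\<lambda>s. x n s - L s) + supnorm (\<lambda>s. x (Suc n) s - L s)) \<longlonglongrightarrow> \<gamma> * 0 + 0"
    by (intro tendsto_add tendsto_mult tendsto_const d0 d1)
  then have "supnorm (\<lambda>s. T L s - L s) \<le> 0"
    by (intro LIMSEQ_le_const) (use bound in auto)
  then have fixL: "T L = L" by (rule supnorm_zero)
  have uniq: "W = L" if "T W = W" for W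
  proof -
    define a where "a = supnorm (\<lambda>s. W s - L s)"
    have h: "a \<le> \<gamma> * a"
      using C[of W L] that fixL unfolding a_def by simp
    have "a \<le> 0"
    proof (rule ccontr)
      assume "\<not> a \<le> 0"
      then have "\<gamma> * a < 1 * a" using g by (intro mult_strict_right_mono) auto
      with h show False by simp
    qed
    then have "supnorm (\<lambda>s. W s - L s) \<le> 0" unfolding a_def .
    then show ?thesis by (rule supnorm_zero)
  qed
  show ?thesis using fixL uniq by blast
qed

lemma iter_conv:
  fixes e \<delta> :: "nat \<Rightarrow> real"
  assumes rec: "\<And>t. e (Suc t) \<le> \<gamma> * e t + \<delta> t" and d: "\<delta> \<longlonglongrightarrow> 0"
    and g: "0 \<le> \<gamma>" "\<gamma> < 1" and nn: "\<And>t. 0 \<le> e t"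
  shows "e \<longlonglongrightarrow> 0"
proof (rule LIMSEQ_I)
  fix \<epsilon> :: real assume "0 < \<epsilon>"
  then have ep: "0 < \<epsilon> / 2 * (1 - \<gamma>)" using g by auto
  obtain t0 where t0: "\<And>t. t \<ge> t0 \<Longrightarrow> norm (\<delta> t) < \<epsilon> / 2 * (1 - \<gamma>)"
    using LIMSEQ_D[OF d ep] by auto
  have ind: "e (t0 + k) \<le> \<gamma> ^ k * e t0 + \<epsilon> / 2" for k
  proof (induction k)
    case 0 then show ?case using \<open>0 < \<epsilon>\<close> by simp
  next
    case (Suc k)
    have "e (t0 + Suc k) \<le> \<gamma> * e (t0 + k) + \<delta> (t0 + k)" using rec[of "t0 + k"] by simp
    also have "\<dots> \<le> \<gamma> * (\<gamma> ^ k * e t0 + \<epsilon> / 2) + \<epsilon> / 2 * (1 - \<gamma>)"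
      using t0[of "t0 + k"] Suc g by (intro add_mono mult_left_mono) auto
    also have "\<dots> = \<gamma> ^ Suc k * e t0 + \<epsilon> / 2" by (simp add: field_simps)
    finally show ?case by simp
  qed
  have "(\<lambda>k. \<gamma> ^ k) \<longlonglongrightarrow> 0"
    by (rule LIMSEQ_power_zero) (use g in auto)
  then have "(\<lambda>k. \<gamma> ^ k * e t0) \<longlonglongrightarrow> 0" by (rule tendsto_mult_left_zero)
  then have "\<exists>no. \<forall>k\<ge>no. norm (\<gamma> ^ k * e t0 - 0) < \<epsilon> / 2"
    by (rule LIMSEQ_D) (use \<open>0 < \<epsilon>\<close> in simp)
  then obtain k0 where k0': "\<forall>k\<ge>k0. norm (\<gamma> ^ k * e t0 - 0) < \<epsilon> / 2"
    by blast
  have k0: "\<gamma> ^ k * e t0 < \<epsilon> / 2" if "k \<ge> k0" for k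
    using k0' that by auto
  have "norm (e n - 0) < \<epsilon>" if n: "n \<ge> t0 + k0" for n
  proof -
    define k where "k = n - t0"
    have k: "n = t0 + k" "k \<ge> k0" using n unfolding k_def by auto
    have "e n < \<epsilon>" using ind[of k] k0[of k] k by simp
    then show "norm (e n - 0) < \<epsilon>" using nn[of n] by simp
  qed
  then show "\<exists>no. \<forall>n\<ge>no. norm (e n - 0) < \<epsilon>" by blast
qed

lemma bounded_pair: "bounded_fs {V, W :: 's::finite \<Rightarrow> real}"
  unfolding bounded_fs_def by (rule exI[of _ "max (supnorm V) (supnorm W)"]) auto

lemma core:
  fixes T :: "nat \<Rightarrow> ('s::finite \<Rightarrow> real) \<Rightarrow> ('s \<Rightarrow> real)" and Ti :: "('s \<Rightarrow> real) \<Rightarrow> ('s \<Rightarrow> real)"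
  assumes g: "0 < \<gamma>" "\<gamma> < 1" and Tc: "\<And>t. is_contraction \<gamma> (T t)"
    and cv: "\<forall>B. bounded_fs B \<longrightarrow> (\<forall>\<epsilon>>0. \<exists>t0. \<forall>t\<ge>t0. \<forall>V\<in>B. supnorm (\<lambda>s. T t V s - Ti V s) \<le> \<epsilon>)"
  shows "is_contraction \<gamma> Ti \<and> (\<exists>Vstar. Ti Vstar = Vstar \<and> (\<forall>W. Ti W = W \<longrightarrow> W = Vstar)
           \<and> (\<forall>Vs :: nat \<Rightarrow> 's \<Rightarrow> real. (\<forall>t. Vs (Suc t) = T t (Vs t)) \<longrightarrow>
                 (\<lambda>t. supnorm (\<lambda>s. Vs t s - Vstar s)) \<longlonglongrightarrow> 0))"
proof -
  have TC: "supnorm (\<lambda>s. T t V s - T t W s) \<le> \<gamma> * supnorm (\<lambda>s. V s - W s)" for t V W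
    using Tc[of t] unfolding is_contraction_def by blast
  have cv2: "\<exists>t0. \<forall>t\<ge>t0. \<forall>X\<in>{V, W}. supnorm (\<lambda>s. T t X s - Ti X s) \<le> \<epsilon>" if "\<epsilon> > 0" for V W \<epsilon>
    using cv[rule_format, OF bounded_pair[of V W] that] .
  have contr: "is_contraction \<gamma> Ti"
    unfolding is_contraction_def
  proof (intro allI)
    fix V W
    show "supnorm (\<lambda>s. Ti V s - Ti W s) \<le> \<gamma> * supnorm (\<lambda>s. V s - W s)"
    proof (rule field_le_epsilon)
      fix \<epsilon> :: real assume "0 < \<epsilon>"
      then obtain t0 where t0: "\<forall>t\<ge>t0. \<forall>X\<in>{V, W}. supnorm (\<lambda>s. T t X s - Ti X s) \<le> \<epsilon> / 2"
        using cv2[of "\<epsilon>/2" V W] by auto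
      have a: "supnorm (\<lambda>s. T t0 V s - Ti V s) \<le> \<epsilon> / 2" using t0 by auto
      have b: "supnorm (\<lambda>s. T t0 W s - Ti W s) \<le> \<epsilon> / 2" using t0 by auto
      have "supnorm (\<lambda>s. Ti V s - Ti W s) \<le> supnorm (\<lambda>s. Ti V s - T t0 V s) + supnorm (\<lambda>s. T t0 V s - Ti W s)"
        by (rule supnorm_tri3)
      moreover have "supnorm (\<lambda>s. T t0 V s - Ti W s) \<le> supnorm (\<lambda>s. T t0 V s - T t0 W s) + supnorm (\<lambda>s. T t0 W s - Ti W s)"
        by (rule supnorm_tri3)
      moreover have "supnorm (\<lambda>s. Ti V s - T t0 V s) = supnorm (\<lambda>s. T t0 V s - Ti V s)"
        by (rule supnorm_comm)
      moreover note TC[of t0 V W] a b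
      ultimately show "supnorm (\<lambda>s. Ti V s - Ti W s) \<le> \<gamma> * supnorm (\<lambda>s. V s - W s) + \<epsilon>"
        by linarith
    qed
  qed
  obtain Vstar where fx: "Ti Vstar = Vstar" and un: "\<forall>W. Ti W = W \<longrightarrow> W = Vstar"
    using contraction_fix[OF contr g] by blast
  define \<delta> where "\<delta> t = supnorm (\<lambda>s. T t Vstar s - Ti Vstar s)" for t
  have d: "\<delta> \<longlonglongrightarrow> 0"
  proof (rule LIMSEQ_I)
    fix \<epsilon> :: real assume "0 < \<epsilon>"
    then obtain t0 where t0: "\<forall>t\<ge>t0. \<forall>X\<in>{Vstar, Vstar}. supnorm (\<lambda>s. T t X s - Ti X s) \<le> \<epsilon> / 2"
      using cv2[of "\<epsilon>/2" Vstar Vstar] by auto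
    have "norm (\<delta> t - 0) < \<epsilon>" if "t \<ge> t0" for t
    proof -
      have "\<delta> t \<le> \<epsilon> / 2" using t0 that unfolding \<delta>_def by simp
      moreover have "0 \<le> \<delta> t" unfolding \<delta>_def by (rule supnorm_nonneg)
      ultimately show ?thesis using \<open>0 < \<epsilon>\<close> by simp
    qed
    then show "\<exists>no. \<forall>n\<ge>no. norm (\<delta> n - 0) < \<epsilon>" by blast
  qed
  have conv: "(\<lambda>t. supnorm (\<lambda>s. Vs t s - Vstar s)) \<longlonglongrightarrow> 0" if it: "\<forall>t. Vs (Suc t) = T t (Vs t)" for Vs :: "nat \<Rightarrow> 's \<Rightarrow> real"
  proof (rule iter_conv[OF _ d])
    fix t
    have "supnorm (\<lambda>s. T t (Vs t) s - Ti Vstar s) \<le> supnorm (\<lambda>s. T t (Vs t) s - T t Vstar s) + \<delta> t"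
      unfolding \<delta>_def by (rule supnorm_tri3)
    moreover note TC[of t "Vs t" Vstar]
    ultimately have "supnorm (\<lambda>s. T t (Vs t) s - Ti Vstar s) \<le> \<gamma> * supnorm (\<lambda>s. Vs t s - Vstar s) + \<delta> t"
      by linarith
    then show "supnorm (\<lambda>s. Vs (Suc t) s - Vstar s) \<le> \<gamma> * supnorm (\<lambda>s. Vs t s - Vstar s) + \<delta> t"
      using fx it by simp
  qed (use g supnorm_nonneg in auto)
  show ?thesis using contr fx un conv by blast
qed



theorem theorem1:
  fixes M :: "'w measure"
    and F :: "nat \<Rightarrow> 'w measure"
    and A :: "'s::finite \<Rightarrow> 'a set"
    and r :: "'s \<Rightarrow> 'a \<Rightarrow> real"
    and \<gamma> :: real
    and U :: "nat \<Rightarrow> 'w \<Rightarrow> 's \<Rightarrow> 'a \<Rightarrow> ('s \<Rightarrow> real) set"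
    and Tinf :: "'w \<Rightarrow> ('s \<Rightarrow> real) \<Rightarrow> ('s \<Rightarrow> real)"
  assumes prob: "prob_space M"
    and filt: "filtration (space M) F"
    and filt_sub: "\<And>t. sets (F t) \<subseteq> sets M"
    and A_fin: "\<And>s. finite (A s)"
    and A_ne: "\<And>s. A s \<noteq> {}"
    and gamma: "0 < \<gamma>" "\<gamma> < 1"
    and U_ne: "\<And>t \<omega> s a. \<omega> \<in> space M \<Longrightarrow> a \<in> A s \<Longrightarrow> U t \<omega> s a \<noteq> {}"
    and U_simplex: "\<And>t \<omega> s a. \<omega> \<in> space M \<Longrightarrow> a \<in> A s \<Longrightarrow> U t \<omega> s a \<subseteq> prob_simplex"
    and U_meas: "\<And>t V s. (\<lambda>\<omega>. rob_bellman A r \<gamma> (U t \<omega>) V s) \<in> borel_measurable (F t)"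
    and A2: "\<And>Uf. (\<And>s a. a \<in> A s \<Longrightarrow> Uf s a \<noteq> {} \<and> Uf s a \<subseteq> prob_simplex)
               \<Longrightarrow> is_contraction \<gamma> (rob_bellman A r \<gamma> Uf)"
    and conv: "AE \<omega> in M. \<forall>B. bounded_fs B \<longrightarrow>
                 (\<forall>\<epsilon>>0. \<exists>t0. \<forall>t\<ge>t0. \<forall>V\<in>B.
                    supnorm (\<lambda>s. rob_bellman A r \<gamma> (U t \<omega>) V s - Tinf \<omega> V s) \<le> \<epsilon>)"
  shows "(AE \<omega> in M. is_contraction \<gamma> (Tinf \<omega>)) \<and>
         (\<exists>\<Omega>0 \<in> sets M. measure M \<Omega>0 = 1 \<and>
            (\<forall>\<omega>\<in>\<Omega>0. \<exists>Vstar. Tinf \<omega> Vstar = Vstar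
                 \<and> (\<forall>W. Tinf \<omega> W = W \<longrightarrow> W = Vstar)
                 \<and> (\<forall>Vs :: nat \<Rightarrow> 's \<Rightarrow> real.
                      (\<forall>t. Vs (Suc t) = rob_bellman A r \<gamma> (U t \<omega>) (Vs t)) \<longrightarrow>
                      (\<lambda>t. supnorm (\<lambda>s. Vs t s - Vstar s)) \<longlonglongrightarrow> 0)))"
proof -
  interpret P: prob_space M by (rule prob)
  obtain N where N: "\<And>\<omega>. \<omega> \<in> space M - N \<Longrightarrow> \<forall>B. bounded_fs B \<longrightarrow>
                 (\<forall>\<epsilon>>0. \<exists>t0. \<forall>t\<ge>t0. \<forall>V\<in>B.
                    supnorm (\<lambda>s. rob_bellman A r \<gamma> (U t \<omega>) V s - Tinf \<omega> V s) \<le> \<epsilon>)"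
    and Nn: "N \<in> null_sets M"
    using AE_E3[OF conv] by blast
  have good: "is_contraction \<gamma> (Tinf \<omega>) \<and> (\<exists>Vstar. Tinf \<omega> Vstar = Vstar
                 \<and> (\<forall>W. Tinf \<omega> W = W \<longrightarrow> W = Vstar)
                 \<and> (\<forall>Vs :: nat \<Rightarrow> 's \<Rightarrow> real.
                      (\<forall>t. Vs (Suc t) = rob_bellman A r \<gamma> (U t \<omega>) (Vs t)) \<longrightarrow>
                      (\<lambda>t. supnorm (\<lambda>s. Vs t s - Vstar s)) \<longlonglongrightarrow> 0))"
    if w: "\<omega> \<in> space M - N" for \<omega>
  proof (rule core[where T = "\<lambda>t. rob_bellman A r \<gamma> (U t \<omega>)", OF gamma])
    show "is_contraction \<gamma> (rob_bellman A r \<gamma> (U t \<omega>))" for t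
      using w U_ne U_simplex by (intro A2) auto
    show "\<forall>B. bounded_fs B \<longrightarrow> (\<forall>\<epsilon>>0. \<exists>t0. \<forall>t\<ge>t0. \<forall>V\<in>B.
            supnorm (\<lambda>s. rob_bellman A r \<gamma> (U t \<omega>) V s - Tinf \<omega> V s) \<le> \<epsilon>)"
      using N[OF w] .
  qed
  have "AE \<omega> in M. is_contraction \<gamma> (Tinf \<omega>)"
    by (rule AE_I'[OF Nn]) (use good in auto)
  moreover have "space M - N \<in> sets M" using Nn by auto
  moreover have "measure M (space M - N) = 1"
  proof -
    have "N \<in> sets M" "measure M N = 0" using Nn by (auto simp: null_sets_def P.emeasure_eq_measure)
    then show ?thesis using P.prob_compl[of N] by simp
  qed
  moreover have "\<forall>\<omega>\<in>space M - N. \<exists>Vstar. Tinf \<omega> Vstar = Vstar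
                 \<and> (\<forall>W. Tinf \<omega> W = W \<longrightarrow> W = Vstar)
                 \<and> (\<forall>Vs :: nat \<Rightarrow> 's \<Rightarrow> real.
                      (\<forall>t. Vs (Suc t) = rob_bellman A r \<gamma> (U t \<omega>) (Vs t)) \<longrightarrow>
                      (\<lambda>t. supnorm (\<lambda>s. Vs t s - Vstar s)) \<longlonglongrightarrow> 0)"
    using good by simp
  ultimately show ?thesis by (intro conjI bexI[of _ "space M - N"])
qed

end
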